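(* Let $A,B$ be Pareto sets of size $n$ each and let $k$ be the size of their Pareto sum. The Successive Sweep Search algorithm computes the Pareto sum of $A$ and $B$ in $\mathcal{O}(n\log n+nk)$ time using $\mathcal{O}(n+k)$ space.
   Context: For $p,p'\in\mathbb{R}^2$, $p$ dominates $p'$ if $p\neq p'$, $p.x\le p'.x$ and $p.y\le p'.y$. A Pareto set is a set $S\subset\mathbb{R}^2$ in which no point dominates another. The Successive Sweep Search algorithm first sorts $A$ and $B$ lexicographically ($S_i$ = element of rank $i$) and uses the Minkowski matrix $M_{ij}=A_i+B_j$ (computed on demand). The Pareto sum $C$ is the set of entries of $M$ not dominated by any entry of $M$. Starting with $C=\{M_{11},M_{nn}\}$ and search range $[x_{\min},x_{\max})\times[y_{\min},y_{\max})$ with $x_{\min}=M_{11}.x$, $x_{\max}=M_{nn}.x$, $y_{\min}=M_{nn}.y$, $y_{\max}=M_{11}.y$, it repeatedly finds the lexicographically smallest entry $m$ of $M$ in the current range; if none exists it stops, otherwise it adds $m$ to $C$ and sets $x_{\min}=m.x$, $y_{\max}=m.y$. The range minimum is found by a single left-to-right sweep: keep a row index $i$, starting at $i=n$ in column $1$; in each column $j$, move upward as long as $i\ge2$ and $M_{i-1,j}$ satisfies $x\ge x_{\min}$ and $y<y_{\max}$; if $M_{ij}$ lies in the range and is lexicographically smaller than the current candidate, it becomes the candidate; then move to column $j+1$ with the same $i$; after the last column the candidate is returned. *)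

theory Defs
  imports Complex_Main "HOL-Library.Product_Lexorder"
begin

type_synonym point = "real \<times> real"

text \<open>The product type carries the lexicographic order (HOL-Library.Product_Lexorder),
  so p < q on points is the lexicographic order used by the paper.\<close>

definition padd :: "point \<Rightarrow> point \<Rightarrow> point" where
  "padd p q = (fst p + fst q, snd p + snd q)"

definition dominates :: "point \<Rightarrow> point \<Rightarrow> bool" where
  "dominates p q \<longleftrightarrow> p \<noteq> q \<and> fst p \<le> fst q \<and> snd p \<le> snd q"

definition is_pareto :: "point set \<Rightarrow> bool" where
  "is_pareto S \<longleftrightarrow> (\<forall>p\<in>S. \<forall>q\<in>S. \<not> dominates p q)"

definition minkowski_sum :: "point set \<Rightarrow> point set \<Rightarrow> point set" where
  "minkowski_sum A B = {padd a b | a b. a \<in> A \<and> b \<in> B}"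

definition pareto_sum :: "point set \<Rightarrow> point set \<Rightarrow> point set" where
  "pareto_sum A B = {c \<in> minkowski_sum A B. \<not> (\<exists>d\<in>minkowski_sum A B. dominates d c)}"

text \<open>Each function returns its result together with a step count (time);
  msort_space gives the peak number of stored list cells during merge sort.\<close>

fun merge_c :: "point list \<Rightarrow> point list \<Rightarrow> point list \<times> nat" where
  "merge_c [] ys = (ys, length ys + 1)"
| "merge_c xs [] = (xs, length xs + 1)"
| "merge_c (x # xs) (y # ys) =
     (if x \<le> y then (let (zs, c) = merge_c xs (y # ys) in (x # zs, c + 1))
      else (let (zs, c) = merge_c (x # xs) ys in (y # zs, c + 1)))"

fun msort_c :: "point list \<Rightarrow> point list \<times> nat" where
  "msort_c xs =
     (if length xs \<le> 1 then (xs, 1)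
      else (let (l, c1) = msort_c (take (length xs div 2) xs);
                (r, c2) = msort_c (drop (length xs div 2) xs);
                (m, c3) = merge_c l r
            in (m, c1 + c2 + c3 + length xs)))"

fun msort_space :: "point list \<Rightarrow> nat" where
  "msort_space xs =
     (if length xs \<le> 1 then 1
      else max (length xs + max (msort_space (take (length xs div 2) xs))
                                (msort_space (drop (length xs div 2) xs)))
               (3 * length xs))"

section \<open>Successive Sweep Search (0-based indices)\<close>

definition in_range :: "real \<Rightarrow> real \<Rightarrow> real \<Rightarrow> real \<Rightarrow> point \<Rightarrow> bool" where
  "in_range xmin xmax ymin ymax p \<longleftrightarrow>
     xmin \<le> fst p \<and> fst p < xmax \<and> ymin \<le> snd p \<and> snd p < ymax"

fun climb :: "(nat \<Rightarrow> nat \<Rightarrow> point) \<Rightarrow> nat \<Rightarrow> real \<Rightarrow> real \<Rightarrow> nat \<Rightarrow> nat \<times> nat" where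
  "climb M j xmin ymax 0 = (0, 0)"
| "climb M j xmin ymax (Suc i) =
     (if xmin \<le> fst (M i j) \<and> snd (M i j) < ymax
      then (let (i', c) = climb M j xmin ymax i in (i', c + 1))
      else (Suc i, 0))"

fun sweep :: "(nat \<Rightarrow> nat \<Rightarrow> point) \<Rightarrow> real \<Rightarrow> real \<Rightarrow> real \<Rightarrow> real \<Rightarrow> nat list
              \<Rightarrow> nat \<Rightarrow> point option \<Rightarrow> point option \<times> nat" where
  "sweep M xmin xmax ymin ymax [] i cand = (cand, 1)"
| "sweep M xmin xmax ymin ymax (j # js) i cand =
     (let (i', c1) = climb M j xmin ymax i;
          p = M i' j;
          cand' = (if in_range xmin xmax ymin ymax p \<and>
                      (case cand of None \<Rightarrow> True | Some q \<Rightarrow> p < q)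
                   then Some p else cand);
          (r, c2) = sweep M xmin xmax ymin ymax js i' cand'
      in (r, c1 + c2 + 1))"

definition range_min :: "(nat \<Rightarrow> nat \<Rightarrow> point) \<Rightarrow> nat \<Rightarrow> real \<Rightarrow> real \<Rightarrow> real \<Rightarrow> real
                          \<Rightarrow> point option \<times> nat" where
  "range_min M n xmin xmax ymin ymax = sweep M xmin xmax ymin ymax [0..<n] (n - 1) None"

text \<open>State: current xmin, ymax, the list C found so far, elapsed time,
  and peak space so far (2n matrix-defining points, the points of C, and a constant
  number of working variables).\<close>
partial_function (tailrec) sss_loop ::
  "(nat \<Rightarrow> nat \<Rightarrow> point) \<Rightarrow> nat \<Rightarrow> real \<Rightarrow> real \<Rightarrow> real \<Rightarrow> real \<Rightarrow> point list
   \<Rightarrow> nat \<Rightarrow> nat \<Rightarrow> point list \<times> nat \<times> nat" where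
  "sss_loop M n xmax ymin xmin ymax C t s =
     (let s' = max s (2 * n + length C + 8);
          (r, c) = range_min M n xmin xmax ymin ymax
      in case r of
           None \<Rightarrow> (C, t + c + 1, s')
         | Some m \<Rightarrow> sss_loop M n xmax ymin (fst m) (snd m) (m # C) (t + c + 1) s')"

definition sss :: "point list \<Rightarrow> point list \<Rightarrow> point list \<times> nat \<times> nat" where
  "sss as bs =
     (let (sa, ta) = msort_c as;
          (sb, tb) = msort_c bs;
          n = length sa;
          M = (\<lambda>i j. padd (sa ! i) (sb ! j));
          m11 = M 0 0;
          mnn = M (n - 1) (n - 1);
          (C, t, s) = sss_loop M n (fst mnn) (snd mnn) (fst m11) (snd m11) [m11, mnn] 0 0
      in (C, ta + tb + t + 1,
          max (max (msort_space as + length bs) (length sa + msort_space bs)) s))"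

definition sss_output :: "point list \<Rightarrow> point list \<Rightarrow> point list" where
  "sss_output as bs = fst (sss as bs)"

definition sss_time :: "point list \<Rightarrow> point list \<Rightarrow> nat" where
  "sss_time as bs = fst (snd (sss as bs))"

definition sss_space :: "point list \<Rightarrow> point list \<Rightarrow> nat" where
  "sss_space as bs = snd (snd (sss as bs))"

end

theory Submission
  imports Defs "HOL-Library.Multiset"
begin


locale grid =
  fixes M :: "nat \<Rightarrow> nat \<Rightarrow> point" and n :: nat
  assumes n_pos: "1 \<le> n"
  and fx_i: "\<lbrakk>i < i'; i' < n; j < n\<rbrakk> \<Longrightarrow> fst (M i j) < fst (M i' j)"
  and fx_j: "\<lbrakk>j < j'; j' < n; i < n\<rbrakk> \<Longrightarrow> fst (M i j) < fst (M i j')"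
  and sy_i: "\<lbrakk>i < i'; i' < n; j < n\<rbrakk> \<Longrightarrow> snd (M i' j) < snd (M i j)"
  and sy_j: "\<lbrakk>j < j'; j' < n; i < n\<rbrakk> \<Longrightarrow> snd (M i j') < snd (M i j)"
begin

lemma fx_le_i: "i \<le> i' \<Longrightarrow> i' < n \<Longrightarrow> j < n \<Longrightarrow> fst (M i j) \<le> fst (M i' j)"
  using fx_i[of i i' j] by (cases "i = i'") auto
lemma fx_le_j: "j \<le> j' \<Longrightarrow> j' < n \<Longrightarrow> i < n \<Longrightarrow> fst (M i j) \<le> fst (M i j')"
  using fx_j[of j j' i] by (cases "j = j'") auto
lemma sy_le_i: "i \<le> i' \<Longrightarrow> i' < n \<Longrightarrow> j < n \<Longrightarrow> snd (M i' j) \<le> snd (M i j)"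
  using sy_i[of i i' j] by (cases "i = i'") auto
lemma sy_le_j: "j \<le> j' \<Longrightarrow> j' < n \<Longrightarrow> i < n \<Longrightarrow> snd (M i j') \<le> snd (M i j)"
  using sy_j[of j j' i] by (cases "j = j'") auto

definition good :: "real \<Rightarrow> real \<Rightarrow> nat \<Rightarrow> nat \<Rightarrow> bool" where
  "good xmin ymax j i \<longleftrightarrow> xmin \<le> fst (M i j) \<and> snd (M i j) < ymax"

lemma good_up: "good xmin ymax j i \<Longrightarrow> i \<le> i' \<Longrightarrow> i' < n \<Longrightarrow> j < n \<Longrightarrow> good xmin ymax j i'"
  unfolding good_def using fx_le_i[of i i' j] sy_le_i[of i i' j] by auto

lemma good_right: "good xmin ymax j i \<Longrightarrow> j \<le> j' \<Longrightarrow> j' < n \<Longrightarrow> i < n \<Longrightarrow> good xmin ymax j' i"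
  unfolding good_def using fx_le_j[of j j' i] sy_le_j[of j j' i] by auto

lemma climb_spec:
  "i < n \<Longrightarrow> climb M j xmin ymax i = (i', c) \<Longrightarrow>
   i' \<le> i \<and> c = i - i' \<and> (\<forall>r. i' \<le> r \<and> r < i \<longrightarrow> good xmin ymax j r) \<and>
   (i' = 0 \<or> \<not> good xmin ymax j (i' - 1))"
proof (induction i arbitrary: i' c)
  case 0
  then show ?case by simp
next
  case (Suc i)
  show ?case
  proof (cases "good xmin ymax j i")
    case True
    obtain a b where ab: "climb M j xmin ymax i = (a, b)" by fastforce
    with Suc.prems True have e: "i' = a" "c = b + 1" by (auto simp: good_def)
    from Suc.IH[OF _ ab] Suc.prems have "a \<le> i \<and> b = i - a \<and> (\<forall>r. a \<le> r \<and> r < i \<longrightarrow> good xmin ymax j r) \<and>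
      (a = 0 \<or> \<not> good xmin ymax j (a - 1))" by simp
    then show ?thesis using e True by (auto simp: less_Suc_eq)
  next
    case False
    with Suc.prems show ?thesis by (auto simp: good_def)
  qed
qed

lemma column:
  assumes "i < n" "j < n" "i = n - 1 \<or> good xmin ymax j i"
    "climb M j xmin ymax i = (i', c)"
  shows "i' \<le> i" "c = i - i'" "i' = n - 1 \<or> good xmin ymax j i'"
    "\<And>r. r < n \<Longrightarrow> in_range xmin xmax ymin ymax (M r j) \<Longrightarrow>
        in_range xmin xmax ymin ymax (M i' j) \<and> M i' j \<le> M r j"
proof -
  note cs = climb_spec[OF assms(1,4)]
  show "i' \<le> i" "c = i - i'" using cs by auto
  show "i' = n - 1 \<or> good xmin ymax j i'"
  proof (cases "i' < i")
    case True then show ?thesis using cs by auto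
  next
    case False then have "i' = i" using cs by auto
    then show ?thesis using assms(3) by auto
  qed
  fix r assume r: "r < n" "in_range xmin xmax ymin ymax (M r j)"
  then have gr: "good xmin ymax j r" by (auto simp: good_def in_range_def)
  have ri: "i' \<le> r"
  proof (rule ccontr)
    assume "\<not> i' \<le> r"
    then have "r \<le> i' - 1" "i' \<noteq> 0" by auto
    moreover have "i' - 1 < n" using cs assms(1) by auto
    ultimately have "good xmin ymax j (i' - 1)" using good_up[OF gr _ _ assms(2)] by auto
    with cs \<open>i' \<noteq> 0\<close> show False by auto
  qed
  have gi: "good xmin ymax j i'"
  proof (cases "i' < i")
    case True then show ?thesis using cs by auto
  next
    case False then have "i' = i" using cs by auto
    then show ?thesis using assms(3) ri r gr proof -
      have "i' = n - 1 \<Longrightarrow> r = i'" using ri r(1) by linarith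
      then show ?thesis using assms(3) \<open>i' = i\<close> gr by auto
    qed
  qed
  have i'n: "i' < n" using cs assms(1) by auto
  have "fst (M i' j) \<le> fst (M r j)" "snd (M r j) \<le> snd (M i' j)"
    using fx_le_i[OF ri r(1) assms(2)] sy_le_i[OF ri r(1) assms(2)] by auto
  then have "in_range xmin xmax ymin ymax (M i' j)" using gi r(2) by (auto simp: good_def in_range_def)
  moreover have "M i' j \<le> M r j"
  proof (cases "i' = r")
    case False
    then have "fst (M i' j) < fst (M r j)" using fx_i[of i' r j] ri r assms(2) by auto
    then show ?thesis by (auto simp: less_eq_prod_def)
  qed simp
  ultimately show "in_range xmin xmax ymin ymax (M i' j) \<and> M i' j \<le> M r j" by simp
qed

definition entry :: "point \<Rightarrow> bool" where
  "entry p \<longleftrightarrow> (\<exists>x j. x < n \<and> j < n \<and> p = M x j)"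

lemma sweep_spec:
  "sorted js \<Longrightarrow> (\<forall>j\<in>set js. j < n) \<Longrightarrow> i < n \<Longrightarrow> (i = n - 1 \<or> (\<forall>j\<in>set js. good xmin ymax j i)) \<Longrightarrow>
   (\<forall>q. cand = Some q \<longrightarrow> in_range xmin xmax ymin ymax q \<and> entry q) \<Longrightarrow>
   sweep M xmin xmax ymin ymax js i cand = (r, c) \<Longrightarrow>
   c \<le> i + length js + 1 \<and>
   (r = None \<longleftrightarrow> (cand = None \<and> (\<forall>j\<in>set js. \<forall>x<n. \<not> in_range xmin xmax ymin ymax (M x j)))) \<and>
   (\<forall>m. r = Some m \<longrightarrow> in_range xmin xmax ymin ymax m \<and> entry m \<and> (\<forall>q. cand = Some q \<longrightarrow> m \<le> q) \<and>
      (\<forall>j\<in>set js. \<forall>x<n. in_range xmin xmax ymin ymax (M x j) \<longrightarrow> m \<le> M x j))"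
proof (induction js arbitrary: i cand r c)
  case Nil
  then show ?case by auto
next
  case (Cons j js)
  obtain i' c1 where cl: "climb M j xmin ymax i = (i', c1)" by fastforce
  define p where "p = M i' j"
  define cand' where "cand' = (if in_range xmin xmax ymin ymax p \<and>
                      (case cand of None \<Rightarrow> True | Some q \<Rightarrow> p < q)
                   then Some p else cand)"
  obtain r' c2 where sw: "sweep M xmin xmax ymin ymax js i' cand' = (r', c2)" by fastforce
  have res: "r = r'" "c = c1 + c2 + 1"
    using Cons.prems(6) cl sw unfolding p_def cand'_def by (auto simp: Let_def)
  have jn: "j < n" using Cons.prems(2) by simp
  have inv: "i = n - 1 \<or> good xmin ymax j i" using Cons.prems(4) by auto
  note col = column[OF Cons.prems(3) jn inv cl]
  have i'n: "i' < n" using col(1) Cons.prems(3) by simp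
  have inv': "i' = n - 1 \<or> (\<forall>j'\<in>set js. good xmin ymax j' i')"
    using col(3) good_right[of xmin ymax j i'] Cons.prems(1,2) i'n by auto
  have pe: "entry p" unfolding p_def entry_def using i'n jn by auto
  have cand'_ok: "\<forall>q. cand' = Some q \<longrightarrow> in_range xmin xmax ymin ymax q \<and> entry q"
    using Cons.prems(5) pe unfolding cand'_def by auto
  note IH = Cons.IH[OF _ _ i'n inv' cand'_ok sw] 
  have IH': "c2 \<le> i' + length js + 1 \<and>
   (r' = None \<longleftrightarrow> (cand' = None \<and> (\<forall>j\<in>set js. \<forall>x<n. \<not> in_range xmin xmax ymin ymax (M x j)))) \<and>
   (\<forall>m. r' = Some m \<longrightarrow> in_range xmin xmax ymin ymax m \<and> entry m \<and> (\<forall>q. cand' = Some q \<longrightarrow> m \<le> q) \<and>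
      (\<forall>j\<in>set js. \<forall>x<n. in_range xmin xmax ymin ymax (M x j) \<longrightarrow> m \<le> M x j))"
    using IH Cons.prems(1,2) by auto
  have colp: "\<And>x. x < n \<Longrightarrow> in_range xmin xmax ymin ymax (M x j) \<Longrightarrow> in_range xmin xmax ymin ymax p \<and> p \<le> M x j"
    using col(4) unfolding p_def by blast
  have c1: "c1 = i - i'" using col by simp
  show ?case
  proof (intro conjI)
    show "c \<le> i + length (j # js) + 1" using res IH' c1 col(1) by auto
    show "(r = None) = (cand = None \<and> (\<forall>j\<in>set (j # js). \<forall>x<n. \<not> in_range xmin xmax ymin ymax (M x j)))"
    proof
      assume "r = None"
      then have a: "cand' = None" "\<forall>j\<in>set js. \<forall>x<n. \<not> in_range xmin xmax ymin ymax (M x j)" using res IH' by auto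
      then have "cand = None" "\<not> in_range xmin xmax ymin ymax p" unfolding cand'_def by (auto split: if_splits)
      then show "cand = None \<and> (\<forall>j\<in>set (j # js). \<forall>x<n. \<not> in_range xmin xmax ymin ymax (M x j))"
        using a colp by auto
    next
      assume a: "cand = None \<and> (\<forall>j\<in>set (j # js). \<forall>x<n. \<not> in_range xmin xmax ymin ymax (M x j))"
      then have "\<not> in_range xmin xmax ymin ymax p" unfolding p_def using i'n by auto
      then have "cand' = None" using a unfolding cand'_def by auto
      then show "r = None" using res IH' a by auto
    qed
    show "\<forall>m. r = Some m \<longrightarrow> in_range xmin xmax ymin ymax m \<and> entry m \<and> (\<forall>q. cand = Some q \<longrightarrow> m \<le> q) \<and>
      (\<forall>j\<in>set (j # js). \<forall>x<n. in_range xmin xmax ymin ymax (M x j) \<longrightarrow> m \<le> M x j)"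
    proof (intro allI impI)
      fix m assume "r = Some m"
      then have rm: "r' = Some m" using res by simp
      have m1: "in_range xmin xmax ymin ymax m \<and> entry m" using IH' rm by blast
      have mc': "\<And>q. cand' = Some q \<Longrightarrow> m \<le> q" using IH' rm by blast
      have mjs: "\<forall>j\<in>set js. \<forall>x<n. in_range xmin xmax ymin ymax (M x j) \<longrightarrow> m \<le> M x j" using IH' rm by blast
      have mc: "\<forall>q. cand = Some q \<longrightarrow> m \<le> q"
      proof (intro allI impI)
        fix q assume q: "cand = Some q"
        show "m \<le> q"
        proof (cases "in_range xmin xmax ymin ymax p \<and> p < q")
          case True
          then have "cand' = Some p" unfolding cand'_def using q by auto
          then have "m \<le> p" using mc' by auto
          then show ?thesis using True by auto
        next
          case False
          then have "cand' = Some q" unfolding cand'_def using q by auto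
          then show ?thesis using mc' by auto
        qed
      qed
      have mp: "in_range xmin xmax ymin ymax p \<Longrightarrow> m \<le> p"
      proof -
        assume ip: "in_range xmin xmax ymin ymax p"
        show "m \<le> p"
        proof (cases cand)
          case None
          then have "cand' = Some p" unfolding cand'_def using ip by auto
          then show ?thesis using mc' by auto
        next
          case (Some q)
          show ?thesis
          proof (cases "p < q")
            case True
            then have "cand' = Some p" unfolding cand'_def using ip Some by auto
            then show ?thesis using mc' by auto
          next
            case False
            then have "cand' = Some q" unfolding cand'_def using Some by auto
            then have "m \<le> q" using mc' by auto
            then show ?thesis using False by auto
          qed
        qed
      qed
      have "\<forall>x<n. in_range xmin xmax ymin ymax (M x j) \<longrightarrow> m \<le> M x j"
        using colp mp order_trans by blast
      then show "in_range xmin xmax ymin ymax m \<and> entry m \<and> (\<forall>q. cand = Some q \<longrightarrow> m \<le> q) \<and>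
      (\<forall>j\<in>set (j # js). \<forall>x<n. in_range xmin xmax ymin ymax (M x j) \<longrightarrow> m \<le> M x j)"
        using m1 mc mjs by auto
    qed
  qed
qed

lemma range_min_spec:
  assumes "range_min M n xmin xmax ymin ymax = (r, c)"
  shows "c \<le> 2 * n"
    "r = None \<longleftrightarrow> (\<forall>x<n. \<forall>j<n. \<not> in_range xmin xmax ymin ymax (M x j))"
    "r = Some m \<Longrightarrow> in_range xmin xmax ymin ymax m \<and> entry m \<and>
        (\<forall>x<n. \<forall>j<n. in_range xmin xmax ymin ymax (M x j) \<longrightarrow> m \<le> M x j)"
proof -
  have "sweep M xmin xmax ymin ymax [0..<n] (n - 1) None = (r, c)"
    using assms by (simp add: range_min_def)
  from sweep_spec[OF _ _ _ _ _ this] n_pos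
  have S: "c \<le> n - 1 + n + 1 \<and>
   (r = None \<longleftrightarrow> (\<forall>j\<in>{0..<n}. \<forall>x<n. \<not> in_range xmin xmax ymin ymax (M x j))) \<and>
   (\<forall>m. r = Some m \<longrightarrow> in_range xmin xmax ymin ymax m \<and> entry m \<and>
      (\<forall>j\<in>{0..<n}. \<forall>x<n. in_range xmin xmax ymin ymax (M x j) \<longrightarrow> m \<le> M x j))" by auto
  show "c \<le> 2 * n" using S n_pos by auto
  show "r = None \<longleftrightarrow> (\<forall>x<n. \<forall>j<n. \<not> in_range xmin xmax ymin ymax (M x j))" using S by auto
  show "r = Some m \<Longrightarrow> in_range xmin xmax ymin ymax m \<and> entry m \<and>
        (\<forall>x<n. \<forall>j<n. in_range xmin xmax ymin ymax (M x j) \<longrightarrow> m \<le> M x j)" using S by auto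
qed

definition P :: "point set" where
  "P = {c. entry c \<and> \<not> (\<exists>d. entry d \<and> dominates d c)}"

lemma finite_entries: "finite (Collect entry)"
proof -
  have "Collect entry \<subseteq> (\<lambda>(x, j). M x j) ` ({..<n} \<times> {..<n})"
    unfolding entry_def by auto
  then show ?thesis using finite_subset by blast
qed

lemma finite_P: "finite P"
  using finite_entries unfolding P_def by (auto intro: finite_subset)

definition cnt :: "real \<Rightarrow> real \<Rightarrow> real \<Rightarrow> real \<Rightarrow> nat" where
  "cnt xmin xmax ymin ymax = card {(x, j). x < n \<and> j < n \<and> in_range xmin xmax ymin ymax (M x j)}"

lemma loop_spec:
  assumes "N = cnt xmin xmax ymin ymax"
    "\<forall>e. entry e \<longrightarrow> ymin \<le> snd e"
    "(xmin, ymax) \<in> P"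
    "set C \<subseteq> P"
    "\<forall>q\<in>P - set C. in_range xmin xmax ymin ymax q"
    "\<forall>q\<in>set C. \<not> in_range xmin xmax ymin ymax q"
    "length C \<le> card (set C) + 1"
    "sss_loop M n xmax ymin xmin ymax C t s = (C', t', s')"
  shows "set C' = P \<and> length C' \<le> card P + 1 \<and>
     t' \<le> t + (card P - card (set C) + 1) * (2 * n + 1) \<and> s' \<le> max s (2 * n + card P + 9)"
  using assms
proof (induction N arbitrary: xmin ymax C t s C' t' s' rule: less_induct)
  case (less N)
  obtain r c where rm: "range_min M n xmin xmax ymin ymax = (r, c)" by fastforce
  note R = range_min_spec[OF rm]
  have cardC: "card (set C) \<le> card P" using less.prems(4) finite_P by (simp add: card_mono)
  have lenC: "length C \<le> card P + 1" using less.prems(7) cardC by simp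
  show ?case
  proof (cases r)
    case None
    have res: "C' = C" "t' = t + c + 1" "s' = max s (2 * n + length C + 8)"
      using less.prems(8) rm None by (subst (asm) sss_loop.simps; auto)+
    have "P - set C = {}"
    proof (rule ccontr)
      assume "P - set C \<noteq> {}"
      then obtain q where q: "q \<in> P - set C" by blast
      then have "entry q" "in_range xmin xmax ymin ymax q" using less.prems(5) P_def by auto
      then show False using R(2) None unfolding entry_def by auto
    qed
    then have "set C = P" using less.prems(4) by auto
    then show ?thesis using res R(1) lenC by auto
  next
    case (Some m)
    note Rm = R(3)[OF Some]
    obtain C2 t2 s2 where rec: "sss_loop M n xmax ymin (fst m) (snd m) (m # C) (t + c + 1) (max s (2 * n + length C + 8)) = (C2, t2, s2)"
      by (metis prod.exhaust)
    have res: "C' = C2" "t' = t2" "s' = s2"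
      using less.prems(8) rm Some rec by (subst (asm) sss_loop.simps; auto)+
    have mP: "m \<in> P"
    proof -
      have "\<not> dominates d m" if d: "entry d" for d
      proof
        assume dm: "dominates d m"
        show False
        proof (cases "xmin \<le> fst d")
          case True
          have "ymin \<le> snd d" using less.prems(2) d by blast
          then have "in_range xmin xmax ymin ymax d"
            using dm Rm True unfolding in_range_def dominates_def by auto
          then have "m \<le> d" using Rm d unfolding entry_def by auto
          moreover have "d < m" using dm unfolding dominates_def less_prod_def' by (auto simp: prod_eq_iff)
          ultimately show False by simp
        next
          case False
          then have "dominates d (xmin, ymax)" using dm Rm unfolding dominates_def in_range_def by auto
          moreover have "\<not> dominates d (xmin, ymax)" using less.prems(3) d unfolding P_def by blast
          ultimately show False by blast
        qed
      qed
      then show ?thesis using Rm unfolding P_def by auto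
    qed
    have mC: "m \<notin> set C" using less.prems(6) Rm by auto
    obtain xm ym where mxy: "m = (xm, ym)" by fastforce
    have inv5: "\<forall>q\<in>P - set (m # C). in_range (fst m) xmax ymin (snd m) q"
    proof
      fix q assume q: "q \<in> P - set (m # C)"
      then have qr: "in_range xmin xmax ymin ymax q" and qe: "entry q" and qm: "q \<noteq> m"
        using less.prems(5) P_def by auto
      have "m \<le> q" using Rm qr qe unfolding entry_def by auto
      have "q \<in> P" using q by auto
      then have nd: "\<not> dominates m q" using mP unfolding P_def by blast
      have "fst m < fst q"
      proof (rule ccontr)
        assume "\<not> fst m < fst q"
        then have "fst m = fst q" "snd m \<le> snd q" using \<open>m \<le> q\<close> unfolding less_eq_prod_def by auto
        then show False using nd qm unfolding dominates_def by auto
      qed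
      moreover have "snd q < snd m"
        using nd qm \<open>fst m < fst q\<close> unfolding dominates_def by auto
      ultimately show "in_range (fst m) xmax ymin (snd m) q" using qr unfolding in_range_def by auto
    qed
    have inv6: "\<forall>q\<in>set (m # C). \<not> in_range (fst m) xmax ymin (snd m) q"
      using less.prems(6) Rm unfolding in_range_def by auto
    have inv7: "length (m # C) \<le> card (set (m # C)) + 1" using less.prems(7) mC by simp
    have inv4: "set (m # C) \<subseteq> P" using mP less.prems(4) by auto
    have inv3: "(fst m, snd m) \<in> P" using mP by simp
    have lt: "cnt (fst m) xmax ymin (snd m) < N"
    proof -
      let ?S = "\<lambda>a b. {(x, j). x < n \<and> j < n \<and> in_range a xmax ymin b (M x j)}"
      obtain xi ji where mi: "xi < n" "ji < n" "m = M xi ji" using Rm unfolding entry_def by auto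
      have sub: "?S (fst m) (snd m) \<subseteq> ?S xmin ymax" using Rm unfolding in_range_def by auto
      have "(xi, ji) \<in> ?S xmin ymax - ?S (fst m) (snd m)" using mi Rm unfolding in_range_def by auto
      then have "?S (fst m) (snd m) \<subset> ?S xmin ymax" using sub by blast
      moreover have "finite (?S xmin ymax)"
        by (rule finite_subset[of _ "{..<n} \<times> {..<n}"]) auto
      ultimately show ?thesis using less.prems(1) unfolding cnt_def by (simp add: psubset_card_mono)
    qed
    have IH: "set C2 = P \<and> length C2 \<le> card P + 1 \<and>
     t2 \<le> (t + c + 1) + (card P - card (set (m # C)) + 1) * (2 * n + 1) \<and>
     s2 \<le> max (max s (2 * n + length C + 8)) (2 * n + card P + 9)"
      using less.IH[OF lt refl less.prems(2) inv3 inv4 inv5 inv6 inv7 rec] by simp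
    have "card (set (m # C)) = card (set C) + 1" using mC by simp
    moreover have "card (set C) + 1 \<le> card P"
      using inv4 finite_P card_mono mC by (metis \<open>card (set (m # C)) = card (set C) + 1\<close>)
    ultimately have K: "card P - card (set (m # C)) + 1 = card P - card (set C)" by simp
    have "t2 \<le> (t + c + 1) + (card P - card (set (m # C)) + 1) * (2 * n + 1)" using IH by blast
    then have "t2 \<le> (t + c + 1) + (card P - card (set C)) * (2 * n + 1)" unfolding K .
    also have "\<dots> \<le> t + (2 * n + 1) + (card P - card (set C)) * (2 * n + 1)" using R(1) by simp
    also have "\<dots> = t + (card P - card (set C) + 1) * (2 * n + 1)" by simp
    finally have "t2 \<le> t + (card P - card (set C) + 1) * (2 * n + 1)" .
    then show ?thesis using IH res lenC by auto
  qed
qed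

lemma fst_min: "i < n \<Longrightarrow> j < n \<Longrightarrow> (i, j) \<noteq> (0, 0) \<Longrightarrow> fst (M 0 0) < fst (M i j)"
proof -
  assume a: "i < n" "j < n" "(i, j) \<noteq> (0, 0)"
  show ?thesis
  proof (cases "i = 0")
    case True
    then show ?thesis using fx_j[of 0 j 0] a by auto
  next
    case False
    then show ?thesis using fx_le_j[of 0 j 0] fx_i[of 0 i j] a by fastforce
  qed
qed

lemma snd_max: "i < n \<Longrightarrow> j < n \<Longrightarrow> (i, j) \<noteq> (0, 0) \<Longrightarrow> snd (M i j) < snd (M 0 0)"
proof -
  assume a: "i < n" "j < n" "(i, j) \<noteq> (0, 0)"
  show ?thesis
  proof (cases "i = 0")
    case True
    then show ?thesis using sy_j[of 0 j 0] a by auto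
  next
    case False
    then show ?thesis using sy_le_j[of 0 j 0] sy_i[of 0 i j] a by fastforce
  qed
qed

lemma fst_max: "i < n \<Longrightarrow> j < n \<Longrightarrow> (i, j) \<noteq> (n - 1, n - 1) \<Longrightarrow> fst (M i j) < fst (M (n - 1) (n - 1))"
proof -
  assume a: "i < n" "j < n" "(i, j) \<noteq> (n - 1, n - 1)"
  show ?thesis
  proof (cases "i = n - 1")
    case True
    then show ?thesis using fx_j[of j "n - 1" "n - 1"] a by auto
  next
    case False
    then show ?thesis using fx_le_j[of j "n - 1" i] fx_i[of i "n - 1" "n - 1"] a by fastforce
  qed
qed

lemma snd_min: "i < n \<Longrightarrow> j < n \<Longrightarrow> (i, j) \<noteq> (n - 1, n - 1) \<Longrightarrow> snd (M (n - 1) (n - 1)) < snd (M i j)"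
proof -
  assume a: "i < n" "j < n" "(i, j) \<noteq> (n - 1, n - 1)"
  show ?thesis
  proof (cases "i = n - 1")
    case True
    then show ?thesis using sy_j[of j "n - 1" "n - 1"] a by auto
  next
    case False
    then show ?thesis using sy_le_j[of j "n - 1" i] sy_i[of i "n - 1" "n - 1"] a by fastforce
  qed
qed

lemma M00_P: "M 0 0 \<in> P"
proof -
  have e: "entry (M 0 0)" unfolding entry_def using n_pos by (intro exI[of _ 0]) auto
  have "\<not> dominates d (M 0 0)" if "entry d" for d
  proof
    assume dm: "dominates d (M 0 0)"
    obtain i j where ij: "i < n" "j < n" "d = M i j" using \<open>entry d\<close> unfolding entry_def by auto
    show False
    proof (cases "(i, j) = (0, 0)")
      case True then show False using dm ij unfolding dominates_def by auto
    next
      case False then show False using fst_min[OF ij(1,2) False] dm ij unfolding dominates_def by auto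
    qed
  qed
  then show ?thesis using e unfolding P_def by auto
qed

lemma Mnn_P: "M (n - 1) (n - 1) \<in> P"
proof -
  have e: "entry (M (n - 1) (n - 1))" unfolding entry_def using n_pos by (intro exI[of _ "n - 1"]) auto
  have "\<not> dominates d (M (n - 1) (n - 1))" if "entry d" for d
  proof
    assume dm: "dominates d (M (n - 1) (n - 1))"
    obtain i j where ij: "i < n" "j < n" "d = M i j" using \<open>entry d\<close> unfolding entry_def by auto
    show False
    proof (cases "(i, j) = (n - 1, n - 1)")
      case True then show False using dm ij unfolding dominates_def by auto
    next
      case False then show False using snd_min[OF ij(1,2) False] dm ij unfolding dominates_def by auto
    qed
  qed
  then show ?thesis using e unfolding P_def by auto
qed

lemma run_spec:
  assumes "sss_loop M n (fst (M (n - 1) (n - 1))) (snd (M (n - 1) (n - 1))) (fst (M 0 0)) (snd (M 0 0))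
             [M 0 0, M (n - 1) (n - 1)] 0 0 = (C, t, s)"
  shows "set C = P" "1 \<le> card P" "t \<le> (card P + 1) * (2 * n + 1)" "s \<le> 2 * n + card P + 9"
proof -
  let ?a = "M 0 0" and ?b = "M (n - 1) (n - 1)"
  have i2: "\<forall>e. entry e \<longrightarrow> snd ?b \<le> snd e"
  proof (intro allI impI)
    fix e assume "entry e"
    then obtain i j where ij: "i < n" "j < n" "e = M i j" unfolding entry_def by auto
    then show "snd ?b \<le> snd e" using snd_min[OF ij(1,2)] by (cases "(i, j) = (n - 1, n - 1)") force+
  qed
  have i3: "(fst ?a, snd ?a) \<in> P" using M00_P by simp
  have i4: "set [?a, ?b] \<subseteq> P" using M00_P Mnn_P by simp
  have i5: "\<forall>q\<in>P - set [?a, ?b]. in_range (fst ?a) (fst ?b) (snd ?b) (snd ?a) q"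
  proof
    fix q assume q: "q \<in> P - set [?a, ?b]"
    then have "entry q" unfolding P_def by auto
    then obtain i j where ij: "i < n" "j < n" "q = M i j" unfolding entry_def by auto
    have "(i, j) \<noteq> (0, 0)" "(i, j) \<noteq> (n - 1, n - 1)" using q ij by fastforce+
    then show "in_range (fst ?a) (fst ?b) (snd ?b) (snd ?a) q"
      using fst_min[OF ij(1,2)] snd_max[OF ij(1,2)] fst_max[OF ij(1,2)] snd_min[OF ij(1,2)] ij
      unfolding in_range_def by fastforce
  qed
  have i6: "\<forall>q\<in>set [?a, ?b]. \<not> in_range (fst ?a) (fst ?b) (snd ?b) (snd ?a) q"
    unfolding in_range_def by auto
  have i7: "length [?a, ?b] \<le> card (set [?a, ?b]) + 1" by (cases "?a = ?b") auto
  note L = loop_spec[OF refl i2 i3 i4 i5 i6 i7 assms]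
  show "set C = P" using L by simp
  show c1: "1 \<le> card P" using M00_P finite_P by (metis One_nat_def Suc_leI card_gt_0_iff empty_iff)
  have "card (set [?a, ?b]) \<ge> 1" by (cases "?a = ?b") auto
  have "card P - card (set [?a, ?b]) + 1 \<le> card P + 1" by simp
  then have "(card P - card (set [?a, ?b]) + 1) * (2 * n + 1) \<le> (card P + 1) * (2 * n + 1)"
    by (rule mult_le_mono1)
  then show "t \<le> (card P + 1) * (2 * n + 1)" using L by linarith
  show "s \<le> 2 * n + card P + 9" using L by simp
qed

end


declare msort_c.simps[simp del] msort_space.simps[simp del]

lemma merge_c_spec: "mset (fst (merge_c xs ys)) = mset xs + mset ys \<and> snd (merge_c xs ys) = length xs + length ys + 1"
  by (induction xs ys rule: merge_c.induct) (auto split: prod.splits)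

lemma merge_c_sorted: "sorted xs \<Longrightarrow> sorted ys \<Longrightarrow> sorted (fst (merge_c xs ys))"
proof (induction xs ys rule: merge_c.induct)
  case (3 x xs y ys)
  show ?case
  proof (cases "x \<le> y")
    case True
    obtain zs c where z: "merge_c xs (y # ys) = (zs, c)" by fastforce
    have "sorted zs" using 3(1)[OF True] 3(3,4) z by simp
    moreover have "set zs = set xs \<union> set (y # ys)"
    proof -
      have "mset zs = mset (xs @ (y # ys))" using merge_c_spec[of xs "y # ys"] z by simp
      then have "set zs = set (xs @ (y # ys))" by (rule mset_eq_setD)
      then show ?thesis by simp
    qed
    moreover have "\<forall>w\<in>set xs \<union> set (y # ys). x \<le> w"
    proof
      fix w assume "w \<in> set xs \<union> set (y # ys)"
      moreover have "\<forall>w\<in>set xs. x \<le> w" using 3(3) by simp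
      moreover have "\<forall>w\<in>set ys. y \<le> w" using 3(4) by simp
      ultimately show "x \<le> w" using True order_trans by (metis Un_iff set_ConsD)
    qed
    ultimately show ?thesis using True z by simp
  next
    case False
    obtain zs c where z: "merge_c (x # xs) ys = (zs, c)" by fastforce
    have "sorted zs" using 3(2)[OF False] 3(3,4) z by simp
    moreover have "set zs = set (x # xs) \<union> set ys"
    proof -
      have "mset zs = mset ((x # xs) @ ys)" using merge_c_spec[of "x # xs" ys] z by simp
      then have "set zs = set ((x # xs) @ ys)" by (rule mset_eq_setD)
      then show ?thesis by simp
    qed
    moreover have "\<forall>w\<in>set (x # xs) \<union> set ys. y \<le> w"
    proof
      fix w assume "w \<in> set (x # xs) \<union> set ys"
      moreover have "\<forall>w\<in>set xs. x \<le> w" using 3(3) by simp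
      moreover have "\<forall>w\<in>set ys. y \<le> w" using 3(4) by simp
      moreover have "y \<le> x" using False by simp
      ultimately show "y \<le> w" using order_trans by (metis Un_iff set_ConsD)
    qed
    ultimately show ?thesis using False z by simp
  qed
qed simp_all

lemma msort_c_spec: "mset (fst (msort_c xs)) = mset xs \<and> sorted (fst (msort_c xs)) \<and> length (fst (msort_c xs)) = length xs"
proof (induction xs rule: msort_c.induct)
  case (1 xs)
  show ?case
  proof (cases "length xs \<le> 1")
    case True
    have "msort_c xs = (xs, 1)" using True by (subst msort_c.simps) simp
    then show ?thesis using True by (auto simp: le_Suc_eq length_Suc_conv)
  next
    case False
    obtain l c1 where l: "msort_c (take (length xs div 2) xs) = (l, c1)" by fastforce
    obtain r c2 where r: "msort_c (drop (length xs div 2) xs) = (r, c2)" by fastforce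
    obtain m c3 where m: "merge_c l r = (m, c3)" by fastforce
    have e: "msort_c xs = (m, c1 + c2 + c3 + length xs)"
      by (subst msort_c.simps) (use False l r m in auto)
    have il: "mset l = mset (take (length xs div 2) xs) \<and> sorted l" using 1(1)[OF False] l by simp
    have ir: "mset r = mset (drop (length xs div 2) xs) \<and> sorted r" using 1(2)[OF False l[symmetric] refl] r by simp
    have "mset m = mset l + mset r" using merge_c_spec[of l r] m by simp
    then have "mset m = mset xs" using il ir by (metis append_take_drop_id mset_append)
    moreover have "sorted m" using merge_c_sorted[of l r] il ir m by simp
    moreover have "length m = length xs" using \<open>mset m = mset xs\<close> by (rule mset_eq_length)
    ultimately show ?thesis using e by simp
  qed
qed

lemma msort_c_time: "1 \<le> length xs \<Longrightarrow> length xs \<le> 2 ^ d \<Longrightarrow> snd (msort_c xs) \<le> 4 * length xs * (d + 1)"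
proof (induction xs arbitrary: d rule: msort_c.induct)
  case (1 xs)
  show ?case
  proof (cases "length xs \<le> 1")
    case True
    then show ?thesis using 1(3) by (subst msort_c.simps) auto
  next
    case False
    obtain l c1 where l: "msort_c (take (length xs div 2) xs) = (l, c1)" by fastforce
    obtain r c2 where r: "msort_c (drop (length xs div 2) xs) = (r, c2)" by fastforce
    obtain m c3 where m: "merge_c l r = (m, c3)" by fastforce
    have e: "msort_c xs = (m, c1 + c2 + c3 + length xs)"
      by (subst msort_c.simps) (use False l r m in auto)
    have "d \<noteq> 0" using False 1(4) by (cases d) auto
    then obtain d' where d: "d = Suc d'" by (cases d) auto
    let ?h = "length xs div 2"
    have h1: "1 \<le> ?h" "1 \<le> length xs - ?h" using False by auto
    have h2: "?h \<le> 2 ^ d'" "length xs - ?h \<le> 2 ^ d'" using 1(4) d by auto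
    have "snd (msort_c (take ?h xs)) \<le> 4 * ?h * (d' + 1)"
    proof -
      have "?h \<le> length xs" by simp
      then have "length (take ?h xs) = ?h" by simp
      then show ?thesis using 1(1)[OF False, of d'] h1 h2 by simp
    qed
    then have c1: "c1 \<le> 4 * ?h * d" using l d by simp
    have "snd (msort_c (drop ?h xs)) \<le> 4 * (length xs - ?h) * (d' + 1)"
      using 1(2)[OF False l[symmetric] refl, of d'] h1 h2 by simp
    then have c2: "c2 \<le> 4 * (length xs - ?h) * d" using r d by simp
    have "length l = ?h" "length r = length xs - ?h"
      using msort_c_spec[of "take ?h xs"] msort_c_spec[of "drop ?h xs"] l r False by auto
    then have c3: "c3 = length xs + 1" using merge_c_spec[of l r] m by simp
    have gen: "\<And>a b L. a + b = L \<Longrightarrow> (4::nat) * a * d + 4 * b * d = 4 * L * d"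
      by (simp add: algebra_simps)
    have "c1 + c2 \<le> 4 * ?h * d + 4 * (length xs - ?h) * d" using c1 c2 by linarith
    also have "\<dots> = 4 * length xs * d" by (rule gen) simp
    finally have "c1 + c2 \<le> 4 * length xs * d" .
    then show ?thesis using e c3 False by simp
  qed
qed

lemma msort_space_bound: "1 \<le> length xs \<Longrightarrow> msort_space xs \<le> 3 * length xs"
proof (induction xs rule: msort_space.induct)
  case (1 xs)
  show ?case
  proof (cases "length xs \<le> 1")
    case True
    then show ?thesis using 1(3) by (subst msort_space.simps) auto
  next
    case False
    let ?h = "length xs div 2"
    have h1: "1 \<le> ?h" "?h \<le> length xs" using False by auto
    have lt: "length (take ?h xs) = ?h" by simp
    have a: "msort_space (take ?h xs) \<le> 3 * ?h" using 1(1)[OF False] h1 unfolding lt by simp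
    have b: "msort_space (drop ?h xs) \<le> 3 * (length xs - ?h)" using 1(2)[OF False] False by simp
    have "length xs + 3 * ?h \<le> 3 * length xs" "length xs + 3 * (length xs - ?h) \<le> 3 * length xs"
      using False by linarith+
    then show ?thesis using a b False by (subst msort_space.simps) auto
  qed
qed


declare msort_c.simps[simp del] msort_space.simps[simp del]

lemma sss_unfold: "msort_c as = (sa, ta) \<Longrightarrow> msort_c bs = (sb, tb) \<Longrightarrow>
  sss_loop (\<lambda>i j. padd (sa ! i) (sb ! j)) (length sa) (fst (padd (sa ! (length sa - 1)) (sb ! (length sa - 1))))
    (snd (padd (sa ! (length sa - 1)) (sb ! (length sa - 1)))) (fst (padd (sa ! 0) (sb ! 0))) (snd (padd (sa ! 0) (sb ! 0)))
    [padd (sa ! 0) (sb ! 0), padd (sa ! (length sa - 1)) (sb ! (length sa - 1))] 0 0 = (C, t, s) \<Longrightarrow>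
  sss as bs = (C, ta + tb + t + 1, max (max (msort_space as + length bs) (length sa + msort_space bs)) s)"
  by (simp only: sss_def Let_def prod.case)

lemma pareto_strict:
  assumes "is_pareto S" "a \<in> S" "b \<in> S" "a < b"
  shows "fst a < fst b \<and> snd b < snd a"
proof -
  have nd: "\<not> dominates a b" using assms(1-3) unfolding is_pareto_def by blast
  have ab: "a \<noteq> b" using assms(4) by simp
  have "fst a < fst b \<or> (fst a = fst b \<and> snd a < snd b)"
    using assms(4) unfolding less_prod_def' by auto
  then have f: "fst a < fst b" using nd ab unfolding dominates_def by auto
  have "snd b < snd a"
  proof (rule ccontr)
    assume "\<not> snd b < snd a"
    then show False using nd ab f unfolding dominates_def by auto
  qed
  then show ?thesis using f by simp
qed

lemma sorted_list_props:
  assumes "distinct as" "is_pareto (set as)" "msort_c as = (sa, ta)"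
  shows "set sa = set as" "length sa = length as"
    "\<And>i i'. i < i' \<Longrightarrow> i' < length sa \<Longrightarrow> fst (sa ! i) < fst (sa ! i') \<and> snd (sa ! i') < snd (sa ! i)"
proof -
  have sp: "mset sa = mset as" "sorted sa" "length sa = length as" using msort_c_spec[of as] assms(3) by auto
  show "set sa = set as" using sp(1) by (rule mset_eq_setD)
  show "length sa = length as" using sp by simp
  have "distinct sa" using mset_eq_imp_distinct_iff[OF sp(1)] assms(1) by simp
  then have sw: "sorted_wrt (<) sa" using sp(2) strict_sorted_iff[of sa] by simp
  have ss: "set sa = set as" using sp(1) by (rule mset_eq_setD)
  fix i i' assume "i < i'" "i' < length sa"
  then have "sa ! i < sa ! i'" using sorted_wrt_nth_less[OF sw] by blast
  moreover have "sa ! i \<in> set sa" "sa ! i' \<in> set sa" using \<open>i < i'\<close> \<open>i' < length sa\<close> by (simp_all add: nth_mem)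
  then have "sa ! i \<in> set as" "sa ! i' \<in> set as" unfolding ss .
  ultimately show "fst (sa ! i) < fst (sa ! i') \<and> snd (sa ! i') < snd (sa ! i)"
    using pareto_strict[OF assms(2)] by blast
qed

lemma grid_inst:
  assumes "length sa = n" "length sb = n" "1 \<le> n"
    "\<And>i i'. i < i' \<Longrightarrow> i' < n \<Longrightarrow> fst (sa ! i) < fst (sa ! i') \<and> snd (sa ! i') < snd (sa ! i)"
    "\<And>i i'. i < i' \<Longrightarrow> i' < n \<Longrightarrow> fst (sb ! i) < fst (sb ! i') \<and> snd (sb ! i') < snd (sb ! i)"
  shows "grid (\<lambda>i j. padd (sa ! i) (sb ! j)) n"
  using assms by unfold_locales (auto simp: padd_def)

lemma log_bound:
  fixes n :: nat assumes "1 \<le> n"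
  obtains d where "n \<le> 2 ^ d" "real d \<le> log 2 (real n) + 1"
proof -
  define d where "d = (LEAST d. n \<le> 2 ^ d)"
  have ex: "n \<le> 2 ^ n" using less_exp[of n] by simp
  have nd: "n \<le> 2 ^ d" unfolding d_def by (rule LeastI[of _ n]) (rule ex)
  have "real d \<le> log 2 (real n) + 1"
  proof (cases d)
    case 0
    have "0 \<le> log 2 (real n)" using assms by simp
    then show ?thesis using 0 by simp
  next
    case (Suc e)
    have "\<not> n \<le> 2 ^ e" using not_less_Least[of e "\<lambda>d. n \<le> 2 ^ d"] Suc unfolding d_def by auto
    then have "real (2 ^ e) < real n" by simp
    then have "2 powr real e < real n" by (simp add: powr_realpow)
    then have "real e < log 2 (real n)" using assms by (subst less_log_iff) auto
    then show ?thesis using Suc by simp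
  qed
  then show ?thesis using nd that by blast
qed

theorem mainTheorem9:
  "\<exists>c::real. \<forall>(as::point list) (bs::point list).
     distinct as \<and> distinct bs \<and> is_pareto (set as) \<and> is_pareto (set bs) \<and>
     length as = length bs \<and> as \<noteq> [] \<longrightarrow>
       (let n = length as; k = card (pareto_sum (set as) (set bs)) in
          set (sss_output as bs) = pareto_sum (set as) (set bs) \<and>
          real (sss_time as bs) \<le> c * (real n * log 2 (real n) + real n * real k) \<and>
          real (sss_space as bs) \<le> c * (real n + real k))"
proof (intro exI[of _ 30] allI impI)
  fix as bs :: "point list"
  assume H: "distinct as \<and> distinct bs \<and> is_pareto (set as) \<and> is_pareto (set bs) \<and>
     length as = length bs \<and> as \<noteq> []"
  obtain sa ta where A: "msort_c as = (sa, ta)" by fastforce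
  obtain sb tb where B: "msort_c bs = (sb, tb)" by fastforce
  note pa = sorted_list_props[of as sa ta] and pb = sorted_list_props[of bs sb tb]
  define n where "n = length as"
  have n1: "1 \<le> n" using H unfolding n_def by (cases as) auto
  have la: "length sa = n" using pa(2) H A n_def by simp
  have lb: "length sb = n" using pb(2) H B n_def by simp
  have sta: "\<And>i i'. i < i' \<Longrightarrow> i' < n \<Longrightarrow> fst (sa ! i) < fst (sa ! i') \<and> snd (sa ! i') < snd (sa ! i)"
    using pa(3) H A la by blast
  have stb: "\<And>i i'. i < i' \<Longrightarrow> i' < n \<Longrightarrow> fst (sb ! i) < fst (sb ! i') \<and> snd (sb ! i') < snd (sb ! i)"
    using pb(3) H B lb by blast
  define M where "M = (\<lambda>i j. padd (sa ! i) (sb ! j))"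
  interpret g: grid M n unfolding M_def by (rule grid_inst[OF la lb n1 sta stb])
  have setsa: "set sa = set as" using pa(1) H A by blast
  have setsb: "set sb = set bs" using pb(1) H B by blast
  have mink: "minkowski_sum (set as) (set bs) = Collect g.entry"
  proof
    show "minkowski_sum (set as) (set bs) \<subseteq> Collect g.entry"
    proof
      fix p assume "p \<in> minkowski_sum (set as) (set bs)"
      then obtain a b where ab: "p = padd a b" "a \<in> set sa" "b \<in> set sb"
        unfolding minkowski_sum_def setsa setsb by auto
      then obtain i j where "i < n" "j < n" "a = sa ! i" "b = sb ! j"
        using la lb by (metis in_set_conv_nth)
      then have "p = M i j" using ab unfolding M_def by simp
      then show "p \<in> Collect g.entry" unfolding mem_Collect_eq g.entry_def using \<open>i < n\<close> \<open>j < n\<close> by blast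
    qed
    show "Collect g.entry \<subseteq> minkowski_sum (set as) (set bs)"
    proof
      fix p assume "p \<in> Collect g.entry"
      then obtain i j where ij0: "i < n" "j < n" "p = M i j" unfolding mem_Collect_eq g.entry_def by blast
      then have ij: "i < n" "j < n" "p = padd (sa ! i) (sb ! j)" unfolding M_def by simp_all
      then have "sa ! i \<in> set sa" "sb ! j \<in> set sb" using la lb by simp_all
      then show "p \<in> minkowski_sum (set as) (set bs)" unfolding minkowski_sum_def setsa[symmetric] setsb[symmetric]
        using ij(3) by blast
    qed
  qed
  have PS: "pareto_sum (set as) (set bs) = g.P"
    unfolding pareto_sum_def g.P_def mink by auto
  obtain C t s where L0: "sss_loop (\<lambda>i j. padd (sa ! i) (sb ! j)) (length sa) (fst (padd (sa ! (length sa - 1)) (sb ! (length sa - 1))))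
    (snd (padd (sa ! (length sa - 1)) (sb ! (length sa - 1)))) (fst (padd (sa ! 0) (sb ! 0))) (snd (padd (sa ! 0) (sb ! 0)))
    [padd (sa ! 0) (sb ! 0), padd (sa ! (length sa - 1)) (sb ! (length sa - 1))] 0 0 = (C, t, s)"
    by (metis prod_cases3)
  have sss_eq: "sss as bs = (C, ta + tb + t + 1, max (max (msort_space as + length bs) (length sa + msort_space bs)) s)"
    by (rule sss_unfold[OF A B L0])
  have L: "sss_loop M n (fst (M (n - 1) (n - 1))) (snd (M (n - 1) (n - 1))) (fst (M 0 0)) (snd (M 0 0))
             [M 0 0, M (n - 1) (n - 1)] 0 0 = (C, t, s)" using L0 unfolding M_def la .
  note R = g.run_spec[OF L]
  define k where "k = card g.P"
  have k1: "1 \<le> k" using R(2) k_def by simp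
  have out: "set (sss_output as bs) = pareto_sum (set as) (set bs)"
  proof -
    have "sss_output as bs = C" unfolding sss_output_def sss_eq by (rule fst_conv)
    then have "set (sss_output as bs) = g.P" using R(1) by (simp only:)
    then show ?thesis using PS by (simp only:)
  qed
  obtain d where d: "n \<le> 2 ^ d" "real d \<le> log 2 (real n) + 1" using log_bound[OF n1] by blast
  have tA: "ta \<le> 4 * n * (d + 1)" using msort_c_time[of as d] A H d(1) n1 unfolding n_def by simp
  have tB: "tb \<le> 4 * n * (d + 1)" using msort_c_time[of bs d] B H d(1) n1 unfolding n_def by simp
  have tL: "t \<le> (k + 1) * (2 * n + 1)" using R(3) k_def by simp
  have nk: "1 \<le> n * k" using n1 k1 by simp
  have "(k + 1) * (2 * n + 1) \<le> 6 * (n * k)"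
  proof -
    have "(k + 1) * (2 * n + 1) = 2 * (n * k) + k + 2 * n + 1" by (simp add: algebra_simps)
    moreover have "k \<le> n * k" "n \<le> n * k" using n1 k1 by simp_all
    ultimately show ?thesis using nk by linarith
  qed
  then have tsum: "ta + tb + t + 1 \<le> 8 * n * d + 8 * n + 7 * (n * k)"
    using tA tB tL nk by (simp add: algebra_simps)
  have "n \<le> n * k" using k1 by simp
  then have tsum2: "ta + tb + t + 1 \<le> 8 * n * d + 15 * (n * k)" using tsum by linarith
  have time: "real (sss_time as bs) \<le> 30 * (real n * log 2 (real n) + real n * real k)"
  proof -
    have "sss_time as bs = ta + tb + t + 1" unfolding sss_time_def sss_eq by (simp only: fst_conv snd_conv)
    then have "real (sss_time as bs) = real (ta + tb + t + 1)" by (simp only:)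
    also have "\<dots> \<le> real (8 * n * d + 15 * (n * k))" using tsum2 by (simp only: of_nat_le_iff)
    also have "\<dots> = 8 * real n * real d + 15 * (real n * real k)" by simp
    also have "\<dots> \<le> 8 * real n * (log 2 (real n) + 1) + 15 * (real n * real k)"
      using d(2) by (simp add: mult_left_mono)
    also have "\<dots> = 8 * (real n * log 2 (real n)) + 8 * real n + 15 * (real n * real k)" by (simp add: algebra_simps)
    also have "\<dots> \<le> 8 * (real n * log 2 (real n)) + 23 * (real n * real k)"
    proof -
      have "real n \<le> real (n * k)" using \<open>n \<le> n * k\<close> by (simp only: of_nat_le_iff)
      then have "real n \<le> real n * real k" by simp
      then show ?thesis by linarith
    qed
    also have "\<dots> \<le> 30 * (real n * log 2 (real n) + real n * real k)"
    proof -
      have "0 \<le> real n * log 2 (real n)" using n1 by simp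
      moreover have "0 \<le> real n * real k" by simp
      moreover have "30 * (real n * log 2 (real n) + real n * real k) = 30 * (real n * log 2 (real n)) + 30 * (real n * real k)"
        by (rule distrib_left)
      ultimately show ?thesis by linarith
    qed
    finally show ?thesis .
  qed
  have space: "real (sss_space as bs) \<le> 30 * (real n + real k)"
  proof -
    have s1: "msort_space as \<le> 3 * n" using msort_space_bound[of as] H n1 unfolding n_def by simp
    have s2: "msort_space bs \<le> 3 * n" using msort_space_bound[of bs] H n1 unfolding n_def by simp
    have s3: "s \<le> 2 * n + k + 9" using R(4) k_def by simp
    have "sss_space as bs = max (max (msort_space as + length bs) (length sa + msort_space bs)) s"
      unfolding sss_space_def sss_eq by (simp only: fst_conv snd_conv)
    also have "\<dots> \<le> 30 * (n + k)"
    proof -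
      have lbn: "length bs = n" using H unfolding n_def by (simp only:)
      show ?thesis unfolding lbn la using s1 s2 s3 n1 k1 by simp
    qed
    finally have "sss_space as bs \<le> 30 * (n + k)" .
    then have "real (sss_space as bs) \<le> real (30 * (n + k))" by (simp only: of_nat_le_iff)
    then show ?thesis by simp
  qed
  show "let n = length as; k = card (pareto_sum (set as) (set bs)) in
          set (sss_output as bs) = pareto_sum (set as) (set bs) \<and>
          real (sss_time as bs) \<le> 30 * (real n * log 2 (real n) + real n * real k) \<and>
          real (sss_space as bs) \<le> 30 * (real n + real k)"
    using out time space unfolding Let_def PS k_def n_def by simp
qed

end
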